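(* Let $\mathcal H_h=\mathcal X_h\times\mathcal Y_h$ be a closed subspace of $\mathcal H=H^1(\Omega)^d\times H^{-1/2}(\Gamma)^d$ and let $\boldsymbol\xi^1,\dots,\boldsymbol\xi^D\in\mathcal Y_h$, $D\in\mathbb N$, be linearly independent. Define for $(\boldsymbol u,\boldsymbol\phi),(\boldsymbol v,\boldsymbol\psi)\in\mathcal H_h$ \[ \widetilde b((\boldsymbol u,\boldsymbol\phi),(\boldsymbol v,\boldsymbol\psi)):=b((\boldsymbol u,\boldsymbol\phi),(\boldsymbol v,\boldsymbol\psi))+\sum_{j=1}^D\langle\boldsymbol\xi^j,(\tfrac12-\mathcal K)\boldsymbol u+\mathcal V\boldsymbol\phi\rangle_\Gamma\,\langle\boldsymbol\xi^j,(\tfrac12-\mathcal K)\boldsymbol v+\mathcal V\boldsymbol\psi\rangle_\Gamma, \] \[ \widetilde F(\boldsymbol v,\boldsymbol\psi):=F(\boldsymbol v,\boldsymbol\psi)+\sum_{j=1}^D\langle\boldsymbol\xi^j,(\tfrac12-\mathcal K)\boldsymbol u_0\rangle_\Gamma\,\langle\boldsymbol\xi^j,(\tfrac12-\mathcal K)\boldsymbol v+\mathcal V\boldsymbol\psi\rangle_\Gamma. \] Then $(\boldsymbol u,\boldsymbol\phi)\in\mathcal H_h$ satisfies $b((\boldsymbol u,\boldsymbol\phi),(\boldsymbol v,\boldsymbol\psi))=F(\boldsymbol v,\boldsymbol\psi)$ for all $(\boldsymbol v,\boldsymbol\psi)\in\mathcal H_h$ if and only if it satisfies $\widetilde b((\boldsymbol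 u,\boldsymbol\phi),(\boldsymbol v,\boldsymbol\psi))=\widetilde F(\boldsymbol v,\boldsymbol\psi)$ for all $(\boldsymbol v,\boldsymbol\psi)\in\mathcal H_h$.
   Context: Let $d\in\{2,3\}$, $\Omega\subset\mathbb R^d$ a bounded connected Lipschitz domain with polyhedral boundary $\Gamma$, outer normal $\boldsymbol n$. $\langle\cdot,\cdot\rangle_\Omega$ is the $L^2(\Omega)$ inner product (Frobenius for tensors), $\langle\cdot,\cdot\rangle_\Gamma$ the extended $L^2(\Gamma)$ duality. $\boldsymbol\epsilon(\boldsymbol u)=\frac12(\nabla\boldsymbol u+\nabla\boldsymbol u^T)$. Fix $\lambda^{\rm ext},\mu^{\rm ext}>0$, $\boldsymbol\sigma^{\rm ext}(\boldsymbol u)=\lambda^{\rm ext}\mathrm{div}(\boldsymbol u)\boldsymbol I+2\mu^{\rm ext}\boldsymbol\epsilon(\boldsymbol u)$, conormal derivative $\gamma_1\boldsymbol u=\boldsymbol\sigma^{\rm ext}(\boldsymbol u)\boldsymbol n$. $\mathcal V,\mathcal K,\mathcal K',\mathcal W$ are the single-layer, double-layer, adjoint double-layer and hypersingular boundary integral operators of linear isotropic elastostatics with Lamé constants $\lambda^{\rm ext},\mu^{\rm ext}$ (built from the Kelvin tensor $\boldsymbol G_{jk}(\boldsymbol z)=\frac{\lambda^{\rm ext}+\mu^{\rm ext}}{2\mu^{\rm ext}(\lambda^{\rm ext}+2\mu^{\rm ext})}(\frac{\lambda^{\rm ext}+3\mu^{\rm ext}}{\lambda^{\rm ext}+\mu^{\rm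 ext}}G(\boldsymbol z)\delta_{jk}+z_jz_k/|\boldsymbol z|^d)$, $G$ the Laplace fundamental solution; $\mathcal V\boldsymbol\phi=\int_\Gamma\boldsymbol G(\cdot-\boldsymbol y)\boldsymbol\phi\,d\Gamma_y$, $\mathcal K\boldsymbol v=\int_\Gamma\gamma_{1,\boldsymbol y}\boldsymbol G(\cdot-\boldsymbol y)\boldsymbol v\,d\Gamma_y$, $\mathcal W=-\gamma_1\mathcal K$). Standing assumption: $\mathcal V$ is symmetric and elliptic on $H^{-1/2}(\Gamma)^d$ (in 2D achieved by scaling). $\mathcal A:\mathbb R^{d\times d}_{\rm sym}\to\mathbb R^{d\times d}_{\rm sym}$ is a strongly monotone and Lipschitz continuous material law (in the sense $C_{\mathcal A}\|\boldsymbol\epsilon(\boldsymbol u-\boldsymbol v)\|^2\le\langle\mathcal A\boldsymbol\epsilon(\boldsymbol u)-\mathcal A\boldsymbol\epsilon(\boldsymbol v),\boldsymbol\epsilon(\boldsymbol u-\boldsymbol v)\rangle_\Omega$, $\|\mathcal A\boldsymbol\epsilon(\boldsymbol u)-\mathcal A\boldsymbol\epsilon(\boldsymbol v)\|_{L^2}\le L_{\mathcal A}\|\boldsymbol\epsilon(\boldsymbol u-\boldsymbol v)\|_{L^2}$). Data $\boldsymbol f\in L^2(\Omega)^d$, $\boldsymbol u_0\in H^{1/2}(\Gamma)^d$, $\boldsymbol\phi_0\in H^{-1/2}(\Gamma)^d$. The symmetric coupling forms are $b((\boldsymbol u,\boldsymbol\phi),(\boldsymbol v,\boldsymbol\psi))=\langle\mathcal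 A\boldsymbol\epsilon(\boldsymbol u),\boldsymbol\epsilon(\boldsymbol v)\rangle_\Omega+\langle\mathcal W\boldsymbol u,\boldsymbol v\rangle_\Gamma+\langle(\mathcal K'-\tfrac12)\boldsymbol\phi,\boldsymbol v\rangle_\Gamma+\langle\boldsymbol\psi,(\tfrac12-\mathcal K)\boldsymbol u+\mathcal V\boldsymbol\phi\rangle_\Gamma$ and $F(\boldsymbol v,\boldsymbol\psi)=\langle\boldsymbol f,\boldsymbol v\rangle_\Omega+\langle\boldsymbol\phi_0+\mathcal W\boldsymbol u_0,\boldsymbol v\rangle_\Gamma+\langle\boldsymbol\psi,(\tfrac12-\mathcal K)\boldsymbol u_0\rangle_\Gamma$. *)

theory Defs
  imports "HOL-Analysis.Analysis"
begin

text \<open>Types: 'x models H^1(Omega)^d, 'y models H^{-1/2}(Gamma)^d, 'z models H^{1/2}(Gamma)^d,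
  'e models L^2(Omega)^{d x d}_sym (strain tensors), 'l models L^2(Omega)^d.
  eps: symmetric gradient, tr: trace H^1 -> H^{1/2}, iota: embedding H^1 -> L^2,
  dual psi v = extended L^2(Gamma) duality, V K K' W the boundary integral operators,
  A the material law.\<close>

definition coupling_b ::
  "('x \<Rightarrow> 'e::real_inner) \<Rightarrow> ('e \<Rightarrow> 'e) \<Rightarrow> ('x \<Rightarrow> 'z::real_vector) \<Rightarrow> ('y \<Rightarrow> 'z \<Rightarrow> real)
   \<Rightarrow> ('y \<Rightarrow> 'z) \<Rightarrow> ('z \<Rightarrow> 'z) \<Rightarrow> ('y::real_vector \<Rightarrow> 'y) \<Rightarrow> ('z \<Rightarrow> 'y)
   \<Rightarrow> 'x \<Rightarrow> 'y \<Rightarrow> 'x \<Rightarrow> 'y \<Rightarrow> real" where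
  "coupling_b eps A tr dual V K K' W u \<phi> v \<psi> =
     inner (A (eps u)) (eps v) + dual (W (tr u)) (tr v)
     + dual (K' \<phi> - (1/2) *\<^sub>R \<phi>) (tr v)
     + dual \<psi> ((1/2) *\<^sub>R tr u - K (tr u) + V \<phi>)"

definition coupling_F ::
  "('x \<Rightarrow> 'l::real_inner) \<Rightarrow> ('x \<Rightarrow> 'z::real_vector) \<Rightarrow> ('y::real_vector \<Rightarrow> 'z \<Rightarrow> real)
   \<Rightarrow> ('z \<Rightarrow> 'z) \<Rightarrow> ('z \<Rightarrow> 'y) \<Rightarrow> 'l \<Rightarrow> 'z \<Rightarrow> 'y \<Rightarrow> 'x \<Rightarrow> 'y \<Rightarrow> real" where
  "coupling_F iota tr dual K W f u0 \<phi>0 v \<psi> =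
     inner f (iota v) + dual (\<phi>0 + W u0) (tr v)
     + dual \<psi> ((1/2) *\<^sub>R u0 - K u0)"

definition stab_b ::
  "('x \<Rightarrow> 'e::real_inner) \<Rightarrow> ('e \<Rightarrow> 'e) \<Rightarrow> ('x \<Rightarrow> 'z::real_vector) \<Rightarrow> ('y \<Rightarrow> 'z \<Rightarrow> real)
   \<Rightarrow> ('y \<Rightarrow> 'z) \<Rightarrow> ('z \<Rightarrow> 'z) \<Rightarrow> ('y::real_vector \<Rightarrow> 'y) \<Rightarrow> ('z \<Rightarrow> 'y)
   \<Rightarrow> nat \<Rightarrow> (nat \<Rightarrow> 'y)
   \<Rightarrow> 'x \<Rightarrow> 'y \<Rightarrow> 'x \<Rightarrow> 'y \<Rightarrow> real" where
  "stab_b eps A tr dual V K K' W D \<xi> u \<phi> v \<psi> =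
     coupling_b eps A tr dual V K K' W u \<phi> v \<psi>
     + (\<Sum>j=1..D. dual (\<xi> j) ((1/2) *\<^sub>R tr u - K (tr u) + V \<phi>)
                 * dual (\<xi> j) ((1/2) *\<^sub>R tr v - K (tr v) + V \<psi>))"

definition stab_F ::
  "('x \<Rightarrow> 'l::real_inner) \<Rightarrow> ('x \<Rightarrow> 'z::real_vector) \<Rightarrow> ('y::real_vector \<Rightarrow> 'z \<Rightarrow> real)
   \<Rightarrow> ('y \<Rightarrow> 'z) \<Rightarrow> ('z \<Rightarrow> 'z) \<Rightarrow> ('z \<Rightarrow> 'y) \<Rightarrow> 'l \<Rightarrow> 'z \<Rightarrow> 'y
   \<Rightarrow> nat \<Rightarrow> (nat \<Rightarrow> 'y) \<Rightarrow> 'x \<Rightarrow> 'y \<Rightarrow> real" where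
  "stab_F iota tr dual V K W f u0 \<phi>0 D \<xi> v \<psi> =
     coupling_F iota tr dual K W f u0 \<phi>0 v \<psi>
     + (\<Sum>j=1..D. dual (\<xi> j) ((1/2) *\<^sub>R u0 - K u0)
                 * dual (\<xi> j) ((1/2) *\<^sub>R tr v - K (tr v) + V \<psi>))"

end

theory Submission
  imports Defs
begin

theorem proposition3p3:
  fixes eps :: "'x::real_normed_vector \<Rightarrow> 'e::real_inner"
    and A :: "'e \<Rightarrow> 'e"
    and tr :: "'x \<Rightarrow> 'z::real_normed_vector"
    and iota :: "'x \<Rightarrow> 'l::real_inner"
    and dual :: "'y::real_normed_vector \<Rightarrow> 'z \<Rightarrow> real"
    and V :: "'y \<Rightarrow> 'z" and K :: "'z \<Rightarrow> 'z" and K' :: "'y \<Rightarrow> 'y" and W :: "'z \<Rightarrow> 'y"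
    and f :: 'l and u0 :: 'z and \<phi>0 :: 'y
    and Xh :: "'x set" and Yh :: "'y set"
    and D :: nat and \<xi> :: "nat \<Rightarrow> 'y"
    and u :: 'x and \<phi> :: 'y
  assumes eps_lin: "bounded_linear eps"
    and tr_lin: "bounded_linear tr"
    and iota_lin: "bounded_linear iota"
    and dual_bil: "bounded_bilinear dual"
    and V_lin: "bounded_linear V" and K_lin: "bounded_linear K"
    and K'_lin: "bounded_linear K'" and W_lin: "bounded_linear W"
    and V_sym: "\<And>\<phi> \<psi>. dual \<psi> (V \<phi>) = dual \<phi> (V \<psi>)"
    and V_ell: "\<exists>c>0. \<forall>\<psi>. c * (norm \<psi>)\<^sup>2 \<le> dual \<psi> (V \<psi>)"
    and A_mono: "\<exists>C>0. \<forall>v w. C * (norm (eps v - eps w))\<^sup>2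
                   \<le> inner (A (eps v) - A (eps w)) (eps v - eps w)"
    and A_lip: "\<exists>L. \<forall>v w. norm (A (eps v) - A (eps w)) \<le> L * norm (eps v - eps w)"
    and Xh_sub: "subspace Xh" and Xh_closed: "closed Xh"
    and Yh_sub: "subspace Yh" and Yh_closed: "closed Yh"
    and \<xi>_in: "\<And>j. j \<in> {1..D} \<Longrightarrow> \<xi> j \<in> Yh"
    and \<xi>_indep: "\<And>c. (\<Sum>j=1..D. c j *\<^sub>R \<xi> j) = 0 \<Longrightarrow> \<forall>j\<in>{1..D}. c j = 0"
    and u_in: "u \<in> Xh" and \<phi>_in: "\<phi> \<in> Yh"
  shows "(\<forall>v\<in>Xh. \<forall>\<psi>\<in>Yh. coupling_b eps A tr dual V K K' W u \<phi> v \<psi>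
                        = coupling_F iota tr dual K W f u0 \<phi>0 v \<psi>)
     \<longleftrightarrow> (\<forall>v\<in>Xh. \<forall>\<psi>\<in>Yh. stab_b eps A tr dual V K K' W D \<xi> u \<phi> v \<psi>
                        = stab_F iota tr dual V K W f u0 \<phi>0 D \<xi> v \<psi>)"
proof -
  interpret d: bounded_bilinear dual by (rule dual_bil)
  interpret e: bounded_linear eps by (rule eps_lin)
  interpret t: bounded_linear tr by (rule tr_lin)
  interpret i: bounded_linear iota by (rule iota_lin)
  interpret vv: bounded_linear V by (rule V_lin)
  interpret k: bounded_linear K by (rule K_lin)
  interpret k': bounded_linear K' by (rule K'_lin)
  interpret w: bounded_linear W by (rule W_lin)
  define R where "R = (1/2) *\<^sub>R tr u - K (tr u) + V \<phi>"
  define w0 where "w0 = (1/2) *\<^sub>R u0 - K u0"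
  define G where "G = (\<lambda>j v \<psi>. dual (\<xi> j) ((1/2) *\<^sub>R tr v - K (tr v) + V \<psi>))"
  have sb: "stab_b eps A tr dual V K K' W D \<xi> u \<phi> v \<psi> = coupling_b eps A tr dual V K K' W u \<phi> v \<psi>
      + (\<Sum>j=1..D. dual (\<xi> j) R * G j v \<psi>)" for v \<psi>
    unfolding stab_b_def R_def G_def by simp
  have sF: "stab_F iota tr dual V K W f u0 \<phi>0 D \<xi> v \<psi> = coupling_F iota tr dual K W f u0 \<phi>0 v \<psi>
      + (\<Sum>j=1..D. dual (\<xi> j) w0 * G j v \<psi>)" for v \<psi>
    unfolding stab_F_def w0_def G_def by simp
  have b0: "coupling_b eps A tr dual V K K' W u \<phi> 0 \<psi> = dual \<psi> R" for \<psi>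
    unfolding coupling_b_def R_def by (simp add: e.zero t.zero d.zero_right)
  have F0: "coupling_F iota tr dual K W f u0 \<phi>0 0 \<psi> = dual \<psi> w0" for \<psi>
    unfolding coupling_F_def w0_def by (simp add: i.zero t.zero d.zero_right k.zero)
  have G0: "G j 0 \<psi> = dual \<psi> (V (\<xi> j))" for j \<psi>
    unfolding G_def by (simp add: t.zero k.zero V_sym)
  have z: "0 \<in> Xh" using Xh_sub by (simp add: subspace_0)
  show ?thesis
  proof
    assume H: "\<forall>v\<in>Xh. \<forall>\<psi>\<in>Yh. coupling_b eps A tr dual V K K' W u \<phi> v \<psi>
                        = coupling_F iota tr dual K W f u0 \<phi>0 v \<psi>"
    have eq: "dual (\<xi> j) R = dual (\<xi> j) w0" if "j \<in> {1..D}" for j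
      using H[rule_format, OF z \<xi>_in[OF that]] b0 F0 by simp
    have "(\<Sum>j=1..D. dual (\<xi> j) R * G j v \<psi>) = (\<Sum>j=1..D. dual (\<xi> j) w0 * G j v \<psi>)" for v \<psi>
      by (rule sum.cong) (auto simp: eq)
    then show "\<forall>v\<in>Xh. \<forall>\<psi>\<in>Yh. stab_b eps A tr dual V K K' W D \<xi> u \<phi> v \<psi>
                        = stab_F iota tr dual V K W f u0 \<phi>0 D \<xi> v \<psi>"
      using H by (simp add: sb sF)
  next
    assume H: "\<forall>v\<in>Xh. \<forall>\<psi>\<in>Yh. stab_b eps A tr dual V K K' W D \<xi> u \<phi> v \<psi>
                        = stab_F iota tr dual V K W f u0 \<phi>0 D \<xi> v \<psi>"
    define d where "d = (\<lambda>j. dual (\<xi> j) (R - w0))"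
    define \<psi> where "\<psi> = (\<Sum>j=1..D. d j *\<^sub>R \<xi> j)"
    have \<psi>_in: "\<psi> \<in> Yh" unfolding \<psi>_def
      using Yh_sub \<xi>_in by (intro subspace_sum subspace_scale) auto
    have "dual \<psi> R + (\<Sum>j=1..D. dual (\<xi> j) R * dual \<psi> (V (\<xi> j)))
        = dual \<psi> w0 + (\<Sum>j=1..D. dual (\<xi> j) w0 * dual \<psi> (V (\<xi> j)))"
      using H[rule_format, OF z \<psi>_in] by (simp add: sb sF b0 F0 G0)
    hence "dual \<psi> (R - w0) + (\<Sum>j=1..D. d j * dual \<psi> (V (\<xi> j))) = 0"
      by (simp add: d_def d.diff_right left_diff_distrib sum_subtractf)
    moreover have "dual \<psi> (R - w0) = (\<Sum>j=1..D. d j * d j)"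
      unfolding \<psi>_def by (simp add: d.sum_left d.scaleR_left d_def)
    moreover have "(\<Sum>j=1..D. d j * dual \<psi> (V (\<xi> j))) = dual \<psi> (V \<psi>)"
    proof -
      have "(\<Sum>j=1..D. d j * dual \<psi> (V (\<xi> j))) = (\<Sum>j=1..D. d j * dual (\<xi> j) (V \<psi>))"
        by (simp add: V_sym)
      also have "\<dots> = dual \<psi> (V \<psi>)"
        by (simp add: \<psi>_def d.sum_left d.scaleR_left)
      finally show ?thesis .
    qed
    moreover have "dual \<psi> (V \<psi>) \<ge> 0"
    proof -
      obtain c where "c > 0" "\<forall>\<psi>. c * (norm \<psi>)\<^sup>2 \<le> dual \<psi> (V \<psi>)" using V_ell by blast
      thus ?thesis by (meson mult_nonneg_nonneg less_imp_le zero_le_power2 order_trans)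
    qed
    ultimately have "(\<Sum>j=1..D. d j * d j) = 0"
      by (smt (verit) sum_nonneg zero_le_square)
    hence dz: "d j = 0" if "j \<in> {1..D}" for j
      using sum_nonneg_eq_0_iff[of "{1..D}" "\<lambda>j. d j * d j"] that by simp
    have eq: "dual (\<xi> j) R = dual (\<xi> j) w0" if "j \<in> {1..D}" for j
      using dz[OF that] by (simp add: d_def d.diff_right)
    have "(\<Sum>j=1..D. dual (\<xi> j) R * G j v \<psi>) = (\<Sum>j=1..D. dual (\<xi> j) w0 * G j v \<psi>)" for v \<psi>
      by (rule sum.cong) (auto simp: eq)
    then show "\<forall>v\<in>Xh. \<forall>\<psi>\<in>Yh. coupling_b eps A tr dual V K K' W u \<phi> v \<psi>
                        = coupling_F iota tr dual K W f u0 \<phi>0 v \<psi>"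
      using H by (simp add: sb sF)
  qed
qed

end
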